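(* Let $\pi>0$, $\bar d>0$, $c\ge0$, $0<\theta_1<\dots<\theta_K$, $0\le\beta_1<\dots<\beta_M\le1$, $A:[0,D]\to[0,\bar d]$ continuously differentiable and decreasing, and $J$ an increasing function. Let $L(Q,\beta,\theta)=\theta[\bar d-\beta A(Q)]-\pi(1-\beta)A(Q)$, $\bar S(Q,\Pi,\Lambda)=L(Q,\Lambda)-\Pi$, $\sigma(Q,\beta,\theta)=-[\theta\beta+\pi(1-\beta)]A'(Q)$, $P(Q,\beta)=\pi(1-\beta)A(Q)$, $U(Q,\beta)=\bar d-\beta A(Q)$. Enumerate the $KM$ types as $\Lambda_1,\dots,\Lambda_{KM}$ with $\sigma(Q,\Lambda_1)\le\dots\le\sigma(Q,\Lambda_{KM})$, let $q(\Lambda_i)\ge0$ be the probability of type $\Lambda_i$, and let $\epsilon$ be an index with $\bar S(Q,\Pi,\Lambda_\epsilon)\le\bar S(Q,\Pi,\Lambda_i)$ for all $i$ and all $(Q,\Pi)$. Put $\eta^-(\Lambda_i,Q_i,Q_{i-1})=L(Q_i,\Lambda_i)-L(Q_{i-1},\Lambda_i)$ and $\eta^+(\Lambda_i,Q_i,Q_{i+1})=L(Q_i,\Lambda_i)-L(Q_{i+1},\Lambda_i)$. Fix data caps $\bm Q=(Q_1,\dots,Q_{KM})$ with $0\le Q_1\le\dots\le Q_{KM}\le D$ and consider the problem of choosing $\Pi_1,\dots,\Pi_{KM}\in\mathbb{R}$ to maximize $$\sum_{i=1}^{KM}q(\Lambda_i)\big[\Pi_i+P(Q_i,\Lambda_i)-c\,U(Q_i,\Lambda_i)-J(Q_i)\big]$$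 subject to: $\Pi_\epsilon\le L(Q_\epsilon,\Lambda_\epsilon)$; for $i=1,\dots,\epsilon-1$: $\Pi_i\le\Pi_{i+1}+\eta^+(\Lambda_i,Q_i,Q_{i+1})$ and $\Pi_i\ge\Pi_{i+1}-\eta^-(\Lambda_{i+1},Q_{i+1},Q_i)$; for $i=\epsilon+1,\dots,KM$: $\Pi_i\le\Pi_{i-1}+\eta^-(\Lambda_i,Q_i,Q_{i-1})$ and $\Pi_i\ge\Pi_{i-1}-\eta^+(\Lambda_{i-1},Q_{i-1},Q_i)$. Then the optimal prices are given by $$\Pi^*_\epsilon(\bm Q)=L(Q_\epsilon,\Lambda_\epsilon),\quad \Pi^*_i(\bm Q)=\Pi^*_{i+1}(\bm Q)+\eta^+(\Lambda_i,Q_i,Q_{i+1})\ (i<\epsilon),\quad \Pi^*_i(\bm Q)=\Pi^*_{i-1}(\bm Q)+\eta^-(\Lambda_i,Q_i,Q_{i-1})\ (i>\epsilon).$$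
   Context: Model: a mobile network operator offers one item (data cap $Q_i$, subscription fee $\Pi_i$) for each user type $\Lambda_i=(\beta,\theta)$ (network substitutability $\beta$, data valuation $\theta$); $\pi$ is the overage price, $\bar d$ the mean demand, $A(Q)$ the expected overage consumption under cap $Q$ (decreasing, convex). The objective is the operator's expected profit: subscription plus overage revenue $P$, minus operational cost $c\,U$ ($U$ = expected consumption) and capacity cost $J$. The constraints are sufficient conditions for individual rationality and incentive compatibility. $\sigma$ is the willingness-to-pay, $\Lambda_\epsilon$ the smallest-payoff type. *)

theory Defs
  imports "HOL-Analysis.Analysis"
begin

text \<open>A user type is a pair (beta, theta): network substitutability and data valuation.\<close>

definition Lval :: "real \<Rightarrow> real \<Rightarrow> (real \<Rightarrow> real) \<Rightarrow> real \<Rightarrow> real \<times> real \<Rightarrow> real" where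
  "Lval pr dbar A Q Lam = (case Lam of (b, t) \<Rightarrow> t * (dbar - b * A Q) - pr * (1 - b) * A Q)"

definition Sbar :: "real \<Rightarrow> real \<Rightarrow> (real \<Rightarrow> real) \<Rightarrow> real \<Rightarrow> real \<Rightarrow> real \<times> real \<Rightarrow> real" where
  "Sbar pr dbar A Q Pr Lam = Lval pr dbar A Q Lam - Pr"

definition sigma :: "real \<Rightarrow> (real \<Rightarrow> real) \<Rightarrow> real \<Rightarrow> real \<times> real \<Rightarrow> real" where
  "sigma pr A' Q Lam = (case Lam of (b, t) \<Rightarrow> - (t * b + pr * (1 - b)) * A' Q)"

definition Pov :: "real \<Rightarrow> (real \<Rightarrow> real) \<Rightarrow> real \<Rightarrow> real \<times> real \<Rightarrow> real" where
  "Pov pr A Q Lam = (case Lam of (b, t) \<Rightarrow> pr * (1 - b) * A Q)"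

definition Ucons :: "real \<Rightarrow> (real \<Rightarrow> real) \<Rightarrow> real \<Rightarrow> real \<times> real \<Rightarrow> real" where
  "Ucons dbar A Q Lam = (case Lam of (b, t) \<Rightarrow> dbar - b * A Q)"

definition eta_minus :: "real \<Rightarrow> real \<Rightarrow> (real \<Rightarrow> real) \<Rightarrow> real \<times> real \<Rightarrow> real \<Rightarrow> real \<Rightarrow> real" where
  "eta_minus pr dbar A Lam Qi Qprev = Lval pr dbar A Qi Lam - Lval pr dbar A Qprev Lam"

definition eta_plus :: "real \<Rightarrow> real \<Rightarrow> (real \<Rightarrow> real) \<Rightarrow> real \<times> real \<Rightarrow> real \<Rightarrow> real \<Rightarrow> real" where
  "eta_plus pr dbar A Lam Qi Qnext = Lval pr dbar A Qi Lam - Lval pr dbar A Qnext Lam"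

definition profit :: "real \<Rightarrow> real \<Rightarrow> real \<Rightarrow> (real \<Rightarrow> real) \<Rightarrow> (real \<Rightarrow> real) \<Rightarrow> nat
    \<Rightarrow> (nat \<Rightarrow> real \<times> real) \<Rightarrow> (nat \<Rightarrow> real) \<Rightarrow> (nat \<Rightarrow> real) \<Rightarrow> (nat \<Rightarrow> real) \<Rightarrow> real" where
  "profit pr dbar c A J N Lam q Qs Pis =
     (\<Sum>i = 1..N. q i * (Pis i + Pov pr A (Qs i) (Lam i) - c * Ucons dbar A (Qs i) (Lam i) - J (Qs i)))"

text \<open>The constraints of the pricing problem (sufficient IR and IC conditions).\<close>
definition feasible :: "real \<Rightarrow> real \<Rightarrow> (real \<Rightarrow> real) \<Rightarrow> nat \<Rightarrow> (nat \<Rightarrow> real \<times> real) \<Rightarrow> nat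
    \<Rightarrow> (nat \<Rightarrow> real) \<Rightarrow> (nat \<Rightarrow> real) \<Rightarrow> bool" where
  "feasible pr dbar A N Lam eps Qs Pis \<longleftrightarrow>
     Pis eps \<le> Lval pr dbar A (Qs eps) (Lam eps) \<and>
     (\<forall>i \<in> {1..<eps}.
        Pis i \<le> Pis (i+1) + eta_plus pr dbar A (Lam i) (Qs i) (Qs (i+1)) \<and>
        Pis i \<ge> Pis (i+1) - eta_minus pr dbar A (Lam (i+1)) (Qs (i+1)) (Qs i)) \<and>
     (\<forall>i \<in> {eps+1..N}.
        Pis i \<le> Pis (i-1) + eta_minus pr dbar A (Lam i) (Qs i) (Qs (i-1)) \<and>
        Pis i \<ge> Pis (i-1) - eta_plus pr dbar A (Lam (i-1)) (Qs (i-1)) (Qs i))"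

end

theory Submission
  imports Defs
begin

lemma single_crossing:
  fixes A A' :: "real \<Rightarrow> real" and L1 L2 :: "real \<times> real"
  assumes "0 \<le> a" "a \<le> b" "b \<le> D"
    and A_deriv: "\<forall>Q\<in>{0..D}. (A has_real_derivative A' Q) (at Q within {0..D})"
    and sig: "\<forall>Q\<in>{0..D}. sigma pr A' Q L1 \<le> sigma pr A' Q L2"
  shows "0 \<le> Lval pr dbar A a L1 - Lval pr dbar A b L1 + Lval pr dbar A b L2 - Lval pr dbar A a L2"
proof -
  obtain b1 t1 where L1: "L1 = (b1, t1)" by fastforce
  obtain b2 t2 where L2: "L2 = (b2, t2)" by fastforce
  define w1 where "w1 = t1 * b1 + pr * (1 - b1)"
  define w2 where "w2 = t2 * b2 + pr * (1 - b2)"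
  have eq: "Lval pr dbar A a L1 - Lval pr dbar A b L1 + Lval pr dbar A b L2 - Lval pr dbar A a L2
       = (w2 - w1) * (A a - A b)"
    unfolding Lval_def L1 L2 w1_def w2_def by (simp add: algebra_simps)
  show ?thesis
  proof (cases "a = b")
    case True then show ?thesis using eq by simp
  next
    case False
    then have ab: "a < b" using assms by simp
    have "\<exists>x\<in>{a<..<b}. A b - A a = (\<lambda>x h. h * A' x) x (b - a)"
    proof (rule mvt_simple[OF ab])
      fix x assume "a \<le> x" "x \<le> b"
      then have "x \<in> {0..D}" using assms by auto
      then have "(A has_real_derivative A' x) (at x within {0..D})" using A_deriv by blast
      then have "(A has_real_derivative A' x) (at x within {a..b})"
        by (rule DERIV_subset) (use assms in auto)
      then show "(A has_derivative (\<lambda>h. h * A' x)) (at x within {a..b})"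
        by (simp add: has_field_derivative_def mult.commute[of _ "A' x"])
    qed
    then obtain x where x: "x \<in> {a<..<b}" "A b - A a = (b - a) * A' x" by auto
    then have "x \<in> {0..D}" using assms by auto
    then have s: "- w1 * A' x \<le> - w2 * A' x"
      using sig unfolding sigma_def L1 L2 w1_def w2_def by auto
    have "(w2 - w1) * (A a - A b) = (b - a) * (- w2 * A' x - (- w1 * A' x))"
    proof -
      have "A a - A b = - ((b - a) * A' x)" using x(2) by linarith
      then show ?thesis by (simp only:) (simp add: algebra_simps)
    qed
    also have "\<dots> \<ge> 0" using s ab by simp
    finally show ?thesis using eq by simp
  qed
qed

theorem theorem3:
  fixes K M N eps :: nat
    and pr dbar c D :: real
    and theta beta :: "nat \<Rightarrow> real"
    and A A' J :: "real \<Rightarrow> real"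
    and Lam :: "nat \<Rightarrow> real \<times> real"
    and q Qs Pistar :: "nat \<Rightarrow> real"
  assumes pi_pos: "pr > 0" and dbar_pos: "dbar > 0" and c_nonneg: "c \<ge> 0"
    and K_pos: "K \<ge> 1" and M_pos: "M \<ge> 1" and N_def: "N = K * M"
    and theta_pos: "theta 1 > 0" and theta_mono: "strict_mono_on {1..K} theta"
    and beta_lo: "beta 1 \<ge> 0" and beta_hi: "beta M \<le> 1" and beta_mono: "strict_mono_on {1..M} beta"
    and A_range: "\<forall>Q\<in>{0..D}. 0 \<le> A Q \<and> A Q \<le> dbar"
    and A_deriv: "\<forall>Q\<in>{0..D}. (A has_real_derivative A' Q) (at Q within {0..D})"
    and A'_cont: "continuous_on {0..D} A'"
    and A_decr: "\<forall>x\<in>{0..D}. \<forall>y\<in>{0..D}. x \<le> y \<longrightarrow> A y \<le> A x"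
    and J_incr: "mono J"
    and Lam_enum: "bij_betw Lam {1..N} ((beta ` {1..M}) \<times> (theta ` {1..K}))"
    and sigma_sorted: "\<forall>Q\<in>{0..D}. \<forall>i\<in>{1..<N}. sigma pr A' Q (Lam i) \<le> sigma pr A' Q (Lam (i+1))"
    and q_nonneg: "\<forall>i\<in>{1..N}. q i \<ge> 0" and q_sum: "(\<Sum>i = 1..N. q i) = 1"
    and eps_range: "eps \<in> {1..N}"
    and eps_min: "\<forall>Q\<in>{0..D}. \<forall>Pr. \<forall>i\<in>{1..N}.
                    Sbar pr dbar A Q Pr (Lam eps) \<le> Sbar pr dbar A Q Pr (Lam i)"
    and Qs_mono: "\<forall>i\<in>{1..<N}. Qs i \<le> Qs (i+1)" and Qs_lo: "0 \<le> Qs 1" and Qs_hi: "Qs N \<le> D"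
    and Pistar_eps: "Pistar eps = Lval pr dbar A (Qs eps) (Lam eps)"
    and Pistar_below: "\<forall>i\<in>{1..<eps}.
          Pistar i = Pistar (i+1) + eta_plus pr dbar A (Lam i) (Qs i) (Qs (i+1))"
    and Pistar_above: "\<forall>i\<in>{eps+1..N}.
          Pistar i = Pistar (i-1) + eta_minus pr dbar A (Lam i) (Qs i) (Qs (i-1))"
  shows "feasible pr dbar A N Lam eps Qs Pistar \<and>
         (\<forall>Pis. feasible pr dbar A N Lam eps Qs Pis \<longrightarrow>
            profit pr dbar c A J N Lam q Qs Pis \<le> profit pr dbar c A J N Lam q Qs Pistar)"
proof -
  have eps1: "1 \<le> eps" "eps \<le> N" using eps_range by auto
  have Qlo: "Qs 1 \<le> Qs i" if "1 \<le> i" "i \<le> N" for i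
    using that
  proof (induction i)
    case 0 then show ?case by simp
  next
    case (Suc n)
    show ?case
    proof (cases "n = 0")
      case True then show ?thesis by simp
    next
      case False
      then have "Qs 1 \<le> Qs n" using Suc by auto
      moreover have "Qs n \<le> Qs (n+1)" using Qs_mono Suc False by auto
      ultimately show ?thesis by simp
    qed
  qed
  have Qhi: "Qs (N - k) \<le> Qs N" if "k < N" for k
    using that
  proof (induction k)
    case 0 then show ?case by simp
  next
    case (Suc k)
    have "Qs (N - Suc k) \<le> Qs (N - Suc k + 1)" using Qs_mono Suc by auto
    moreover have "N - Suc k + 1 = N - k" using Suc by simp
    ultimately show ?case using Suc by simp
  qed
  have Qin: "Qs i \<in> {0..D}" if "1 \<le> i" "i \<le> N" for i
  proof -
    have "Qs i \<le> Qs N" using Qhi[of "N - i"] that by simp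
    then show ?thesis using Qlo[OF that] Qs_lo Qs_hi by auto
  qed
  have sc: "0 \<le> Lval pr dbar A (Qs j) (Lam j) - Lval pr dbar A (Qs (j+1)) (Lam j)
              + Lval pr dbar A (Qs (j+1)) (Lam (j+1)) - Lval pr dbar A (Qs j) (Lam (j+1))"
    if "1 \<le> j" "j < N" for j
  proof (rule single_crossing[where D = D and A' = A'])
    show "0 \<le> Qs j" using Qin[of j] that by simp
    show "Qs j \<le> Qs (j+1)" using Qs_mono that by simp
    show "Qs (j+1) \<le> D" using Qin[of "j+1"] that by simp
    show "\<forall>Q\<in>{0..D}. (A has_real_derivative A' Q) (at Q within {0..D})" by fact
    show "\<forall>Q\<in>{0..D}. sigma pr A' Q (Lam j) \<le> sigma pr A' Q (Lam (j + 1))"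
      using sigma_sorted that by auto
  qed
  have feas: "feasible pr dbar A N Lam eps Qs Pistar"
    unfolding feasible_def
  proof (intro conjI ballI)
    show "Pistar eps \<le> Lval pr dbar A (Qs eps) (Lam eps)" using Pistar_eps by simp
  next
    fix i assume i: "i \<in> {1..<eps}"
    then show "Pistar i \<le> Pistar (i+1) + eta_plus pr dbar A (Lam i) (Qs i) (Qs (i+1))"
      using Pistar_below by simp
    have "0 \<le> Lval pr dbar A (Qs i) (Lam i) - Lval pr dbar A (Qs (i+1)) (Lam i)
              + Lval pr dbar A (Qs (i+1)) (Lam (i+1)) - Lval pr dbar A (Qs i) (Lam (i+1))"
      using sc[of i] i eps1 by auto
    then show "Pistar (i+1) - eta_minus pr dbar A (Lam (i+1)) (Qs (i+1)) (Qs i) \<le> Pistar i"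
      using Pistar_below i unfolding eta_plus_def eta_minus_def by auto
  next
    fix i assume i: "i \<in> {eps+1..N}"
    then show "Pistar i \<le> Pistar (i-1) + eta_minus pr dbar A (Lam i) (Qs i) (Qs (i-1))"
      using Pistar_above by simp
    have ii: "i - 1 + 1 = i" using i by auto
    have "0 \<le> Lval pr dbar A (Qs (i-1)) (Lam (i-1)) - Lval pr dbar A (Qs (i-1+1)) (Lam (i-1))
              + Lval pr dbar A (Qs (i-1+1)) (Lam (i-1+1)) - Lval pr dbar A (Qs (i-1)) (Lam (i-1+1))"
      using sc[of "i-1"] i eps1 by auto
    then show "Pistar (i-1) - eta_plus pr dbar A (Lam (i-1)) (Qs (i-1)) (Qs i) \<le> Pistar i"
      using Pistar_above i unfolding eta_plus_def eta_minus_def ii by auto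
  qed
  have opt: "profit pr dbar c A J N Lam q Qs Pis \<le> profit pr dbar c A J N Lam q Qs Pistar"
    if F: "feasible pr dbar A N Lam eps Qs Pis" for Pis
  proof -
    have F0: "Pis eps \<le> Lval pr dbar A (Qs eps) (Lam eps)"
      and F1: "\<forall>i \<in> {1..<eps}. Pis i \<le> Pis (i+1) + eta_plus pr dbar A (Lam i) (Qs i) (Qs (i+1))"
      and F2: "\<forall>i \<in> {eps+1..N}. Pis i \<le> Pis (i-1) + eta_minus pr dbar A (Lam i) (Qs i) (Qs (i-1))"
      using F unfolding feasible_def by auto
    have below: "Pis (eps - k) \<le> Pistar (eps - k)" if "k < eps" for k
      using that
    proof (induction k)
      case 0 then show ?case using F0 Pistar_eps by simp
    next
      case (Suc k)
      let ?i = "eps - Suc k"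
      have i: "?i \<in> {1..<eps}" and ii: "?i + 1 = eps - k" using Suc.prems by auto
      have "Pis ?i \<le> Pis (?i+1) + eta_plus pr dbar A (Lam ?i) (Qs ?i) (Qs (?i+1))"
        using F1 i by blast
      also have "\<dots> \<le> Pistar (?i+1) + eta_plus pr dbar A (Lam ?i) (Qs ?i) (Qs (?i+1))"
        using Suc ii by simp
      also have "\<dots> = Pistar ?i" using Pistar_below i by simp
      finally show ?case .
    qed
    have above: "Pis (eps + k) \<le> Pistar (eps + k)" if "eps + k \<le> N" for k
      using that
    proof (induction k)
      case 0 then show ?case using F0 Pistar_eps by simp
    next
      case (Suc k)
      let ?i = "eps + Suc k"
      have i: "?i \<in> {eps+1..N}" and ii: "?i - 1 = eps + k" using Suc.prems by auto
      have "Pis ?i \<le> Pis (?i-1) + eta_minus pr dbar A (Lam ?i) (Qs ?i) (Qs (?i-1))"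
        using F2 i by blast
      also have "\<dots> \<le> Pistar (?i-1) + eta_minus pr dbar A (Lam ?i) (Qs ?i) (Qs (?i-1))"
        using Suc ii by simp
      also have "\<dots> = Pistar ?i" using Pistar_above i by simp
      finally show ?case .
    qed
    have le: "Pis i \<le> Pistar i" if "i \<in> {1..N}" for i
    proof (cases "i \<le> eps")
      case True
      then show ?thesis using below[of "eps - i"] that by auto
    next
      case False
      then show ?thesis using above[of "i - eps"] that by auto
    qed
    show ?thesis unfolding profit_def
    proof (rule sum_mono)
      fix i assume "i \<in> {1..N}"
      then show "q i * (Pis i + Pov pr A (Qs i) (Lam i) - c * Ucons dbar A (Qs i) (Lam i) - J (Qs i))
          \<le> q i * (Pistar i + Pov pr A (Qs i) (Lam i) - c * Ucons dbar A (Qs i) (Lam i) - J (Qs i))"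
        using le q_nonneg by (intro mult_left_mono) auto
    qed
  qed
  show ?thesis using feas opt by blast
qed

end
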